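(* There exists a unique $k[[x]]$-algebra homomorphism $$\varphi: k[[y_0,y_1,y_2]]/(y_1^2-y_0y_2)\longrightarrow k[[x_0,x_1]]$$ which is grading preserving (i.e. $\varphi(y_p)$ is homogeneous of degree $p$ for $p=0,1,2$) and Poisson. It is given by $$y_0\mapsto x_0,\qquad y_1\mapsto -x_0x_1,\qquad y_2\mapsto x_0x_1^2.$$
   Context: $k$ is a field of characteristic zero. $A=k[[y_0,y_1,y_2]]/(y_1^2-y_0y_2)$ is the inverse limit $\varprojlim_n\mathcal P(\mathcal O_n)$ of the graded Poisson algebras of principal symbols of differential operators on $\mathcal O_n=k[x]/(x^{n+1})$; it is graded by $\deg y_p=p$ with Poisson bracket determined by $\{y_0,y_1\}=y_0$, $\{y_0,y_2\}=2y_1$, $\{y_1,y_2\}=y_2$. $B=k[[x_0,x_1]]$ is the completion at $(x_0,x_1)$ of the algebra $k[x_0,x_1]$ of principal symbols of differential operators on $k[x]$ ($x_0$ the symbol of $x$, $x_1$ the symbol of $\frac d{dx}$), graded by $\deg x_0=0$, $\deg x_1=1$ (degree in $x_1$), with Poisson bracket determined by $\{x_0,x_1\}=-1$. Both are $k[[x]]$-algebras via $x\mapsto y_0$ and $x\mapsto x_0$ respectively. "Poisson" means $\varphi$ preserves the brackets. *)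

theory Defs
  imports "HOL-Algebra.QuotRing" "HOL-Computational_Algebra.Formal_Power_Series"
begin

text \<open>An element of k[[x0,x1]] is its coefficient function nat*nat => k,
  (i,j) being the exponent of x0^i x1^j.\<close>

type_synonym 'k ps2 = "nat \<times> nat \<Rightarrow> 'k"
type_synonym 'k ps3 = "nat \<times> nat \<times> nat \<Rightarrow> 'k"

definition ps2_mult :: "'k::comm_ring_1 ps2 \<Rightarrow> 'k ps2 \<Rightarrow> 'k ps2" where
  "ps2_mult f g = (\<lambda>(i,j). \<Sum>a\<le>i. \<Sum>b\<le>j. f (a,b) * g (i-a, j-b))"

definition ps3_mult :: "'k::comm_ring_1 ps3 \<Rightarrow> 'k ps3 \<Rightarrow> 'k ps3" where
  "ps3_mult f g = (\<lambda>(i,j,l). \<Sum>a\<le>i. \<Sum>b\<le>j. \<Sum>c\<le>l. f (a,b,c) * g (i-a, j-b, l-c))"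

definition PS2 :: "('k::comm_ring_1 ps2) ring" where
  "PS2 = \<lparr>carrier = UNIV, monoid.mult = ps2_mult, one = (\<lambda>m. if m = (0,0) then 1 else 0),
          zero = (\<lambda>_. 0), add = (\<lambda>f g m. f m + g m)\<rparr>"

definition PS3 :: "('k::comm_ring_1 ps3) ring" where
  "PS3 = \<lparr>carrier = UNIV, monoid.mult = ps3_mult, one = (\<lambda>m. if m = (0,0,0) then 1 else 0),
          zero = (\<lambda>_. 0), add = (\<lambda>f g m. f m + g m)\<rparr>"

definition x0 :: "'k::comm_ring_1 ps2" where "x0 = (\<lambda>m. if m = (1,0) then 1 else 0)"
definition x1 :: "'k::comm_ring_1 ps2" where "x1 = (\<lambda>m. if m = (0,1) then 1 else 0)"
definition y0 :: "'k::comm_ring_1 ps3" where "y0 = (\<lambda>m. if m = (1,0,0) then 1 else 0)"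
definition y1 :: "'k::comm_ring_1 ps3" where "y1 = (\<lambda>m. if m = (0,1,0) then 1 else 0)"
definition y2 :: "'k::comm_ring_1 ps3" where "y2 = (\<lambda>m. if m = (0,0,1) then 1 else 0)"

definition d2_0 :: "'k::comm_ring_1 ps2 \<Rightarrow> 'k ps2" where
  "d2_0 f = (\<lambda>(i,j). of_nat (i+1) * f (i+1, j))"
definition d2_1 :: "'k::comm_ring_1 ps2 \<Rightarrow> 'k ps2" where
  "d2_1 f = (\<lambda>(i,j). of_nat (j+1) * f (i, j+1))"
definition d3_0 :: "'k::comm_ring_1 ps3 \<Rightarrow> 'k ps3" where
  "d3_0 f = (\<lambda>(i,j,l). of_nat (i+1) * f (i+1, j, l))"
definition d3_1 :: "'k::comm_ring_1 ps3 \<Rightarrow> 'k ps3" where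
  "d3_1 f = (\<lambda>(i,j,l). of_nat (j+1) * f (i, j+1, l))"
definition d3_2 :: "'k::comm_ring_1 ps3 \<Rightarrow> 'k ps3" where
  "d3_2 f = (\<lambda>(i,j,l). of_nat (l+1) * f (i, j, l+1))"

text \<open>On k[[x0,x1]]: the bracket determined by {x0,x1} = -1, i.e.
  {f,g} = {x0,x1} (d0 f d1 g - d1 f d0 g).\<close>
definition B_bracket :: "'k::comm_ring_1 ps2 \<Rightarrow> 'k ps2 \<Rightarrow> 'k ps2" where
  "B_bracket f g = (\<lambda>m. - (ps2_mult (d2_0 f) (d2_1 g) m - ps2_mult (d2_1 f) (d2_0 g) m))"

text \<open>On k[[y0,y1,y2]]: the bracket determined by {y0,y1} = y0, {y0,y2} = 2 y1,
  {y1,y2} = y2, i.e. {f,g} = sum over i<j of {yi,yj} (di f dj g - dj f di g).\<close>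
definition wedge3 :: "('k::comm_ring_1 ps3 \<Rightarrow> 'k ps3) \<Rightarrow> ('k ps3 \<Rightarrow> 'k ps3) \<Rightarrow> 'k ps3 \<Rightarrow> 'k ps3 \<Rightarrow> 'k ps3" where
  "wedge3 D E f g = (\<lambda>m. ps3_mult (D f) (E g) m - ps3_mult (E f) (D g) m)"

definition P3_bracket :: "'k::comm_ring_1 ps3 \<Rightarrow> 'k ps3 \<Rightarrow> 'k ps3" where
  "P3_bracket f g = (\<lambda>m.
      ps3_mult y0 (wedge3 d3_0 d3_1 f g) m
    + ps3_mult (\<lambda>n. 2 * y1 n) (wedge3 d3_0 d3_2 f g) m
    + ps3_mult y2 (wedge3 d3_1 d3_2 f g) m)"

definition A_ideal :: "'k::comm_ring_1 ps3 set" where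
  "A_ideal = genideal PS3 {(\<lambda>m. ps3_mult y1 y1 m - ps3_mult y0 y2 m)}"

definition A_ring :: "('k::comm_ring_1 ps3 set) ring" where
  "A_ring = PS3 Quot A_ideal"

definition A_cls :: "'k::comm_ring_1 ps3 \<Rightarrow> 'k ps3 set" where
  "A_cls f = A_ideal +>\<^bsub>PS3\<^esub> f"

text \<open>Induced bracket on A (computed on representatives; well defined since
  y1^2 - y0 y2 is a Casimir).\<close>
definition A_bracket :: "'k::comm_ring_1 ps3 set \<Rightarrow> 'k ps3 set \<Rightarrow> 'k ps3 set" where
  "A_bracket X Y = A_cls (P3_bracket (SOME a. a \<in> X) (SOME b. b \<in> Y))"

text \<open>x \<mapsto> y0 and x \<mapsto> x0.\<close>
definition iotaA :: "'k::comm_ring_1 fps \<Rightarrow> 'k ps3 set" where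
  "iotaA h = A_cls (\<lambda>(i,j,l). if j = 0 \<and> l = 0 then fps_nth h i else 0)"
definition iotaB :: "'k::comm_ring_1 fps \<Rightarrow> 'k ps2" where
  "iotaB h = (\<lambda>(i,j). if j = 0 then fps_nth h i else 0)"

definition is_kx_alg_hom :: "('k::comm_ring_1 ps3 set \<Rightarrow> 'k ps2) \<Rightarrow> bool" where
  "is_kx_alg_hom \<phi> \<longleftrightarrow> \<phi> \<in> ring_hom A_ring PS2 \<and> (\<forall>h. \<phi> (iotaA h) = iotaB h)"

definition B_homog :: "nat \<Rightarrow> 'k::comm_ring_1 ps2 \<Rightarrow> bool" where
  "B_homog p f \<longleftrightarrow> (\<forall>i j. f (i,j) \<noteq> 0 \<longrightarrow> j = p)"

definition grading_preserving :: "('k::comm_ring_1 ps3 set \<Rightarrow> 'k ps2) \<Rightarrow> bool" where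
  "grading_preserving \<phi> \<longleftrightarrow>
     B_homog 0 (\<phi> (A_cls y0)) \<and> B_homog 1 (\<phi> (A_cls y1)) \<and> B_homog 2 (\<phi> (A_cls y2))"

definition is_poisson :: "('k::comm_ring_1 ps3 set \<Rightarrow> 'k ps2) \<Rightarrow> bool" where
  "is_poisson \<phi> \<longleftrightarrow> (\<forall>X\<in>carrier A_ring. \<forall>Y\<in>carrier A_ring.
       \<phi> (A_bracket X Y) = B_bracket (\<phi> X) (\<phi> Y))"

end

theory Submission imports Defs "HOL-Library.Product_Plus" begin
unbundle fps_syntax

definition to2 :: "'k::comm_ring_1 ps2 \<Rightarrow> 'k fps fps" where
  "to2 f = Abs_fps (\<lambda>j. Abs_fps (\<lambda>i. f (i,j)))"
definition to3 :: "'k::comm_ring_1 ps3 \<Rightarrow> 'k fps fps fps" where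
  "to3 f = Abs_fps (\<lambda>l. Abs_fps (\<lambda>j. Abs_fps (\<lambda>i. f (i,j,l))))"

lemma to2_nth[simp]: "to2 f $ j $ i = f (i,j)"
  by (simp add: to2_def)
lemma to3_nth[simp]: "to3 f $ l $ j $ i = f (i,j,l)"
  by (simp add: to3_def)

lemma to2_eq_iff: "to2 f = to2 g \<longleftrightarrow> f = g"
proof
  assume "to2 f = to2 g"
  then have "\<And>i j. f (i,j) = g (i,j)" by (metis to2_nth)
  then show "f = g" by auto
qed simp

lemma to3_eq_iff: "to3 f = to3 g \<longleftrightarrow> f = g"
proof
  assume "to3 f = to3 g"
  then have "\<And>i j l. f (i,j,l) = g (i,j,l)" by (metis to3_nth)
  then show "f = g" by auto
qed simp

lemma to2_mult: "to2 (ps2_mult f g) = to2 f * to2 g"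
proof (rule fps_ext, rule fps_ext)
  fix j i
  have "(to2 f * to2 g) $ j $ i = (\<Sum>b\<le>j. \<Sum>a\<le>i. f (a,b) * g (i-a, j-b))"
    by (simp add: fps_mult_nth fps_sum_nth atLeast0AtMost)
  also have "\<dots> = ps2_mult f g (i,j)"
    unfolding ps2_mult_def by (simp add: sum_distrib_left sum_distrib_right) (rule sum.swap)
  finally show "to2 (ps2_mult f g) $ j $ i = (to2 f * to2 g) $ j $ i" by simp
qed

lemma to3_mult: "to3 (ps3_mult f g) = to3 f * to3 g"
proof (rule fps_ext, rule fps_ext, rule fps_ext)
  fix l j i
  have "(to3 f * to3 g) $ l $ j $ i = (\<Sum>c\<le>l. \<Sum>b\<le>j. \<Sum>a\<le>i. f (a,b,c) * g (i-a, j-b, l-c))"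
    by (simp add: fps_mult_nth fps_sum_nth atLeast0AtMost)
  also have "\<dots> = ps3_mult f g (i,j,l)"
    unfolding ps3_mult_def
    apply simp
    apply (rule sym)
    apply (subst sum.swap[of _ "{..i}"])
    apply (rule trans[OF sum.cong[OF refl sum.swap]])
    by (rule sum.swap)
  finally show "to3 (ps3_mult f g) $ l $ j $ i = (to3 f * to3 g) $ l $ j $ i" by simp
qed

lemma to2_add: "to2 (\<lambda>m. f m + g m) = to2 f + to2 g"
  by (intro fps_ext) simp
lemma to2_diff: "to2 (\<lambda>m. f m - g m) = to2 f - to2 g"
  by (intro fps_ext) simp
lemma to2_uminus: "to2 (\<lambda>m. - f m) = - to2 f"
  by (intro fps_ext) simp
lemma to2_zero: "to2 (\<lambda>m. 0) = 0"
  by (intro fps_ext) simp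
lemma to2_one: "to2 (\<lambda>m. if m = (0,0) then 1 else 0) = 1"
  by (intro fps_ext) (simp add: fps_one_nth)
lemma to3_add: "to3 (\<lambda>m. f m + g m) = to3 f + to3 g"
  by (intro fps_ext) simp
lemma to3_diff: "to3 (\<lambda>m. f m - g m) = to3 f - to3 g"
  by (intro fps_ext) simp
lemma to3_uminus: "to3 (\<lambda>m. - f m) = - to3 f"
  by (intro fps_ext) simp
lemma to3_zero: "to3 (\<lambda>m. 0) = 0"
  by (intro fps_ext) simp
lemma to3_one: "to3 (\<lambda>m. if m = (0,0,0) then 1 else 0) = 1"
  by (intro fps_ext) (simp add: fps_one_nth)

lemmas to2_simps = to2_mult to2_add to2_diff to2_uminus to2_zero to2_one
lemmas to3_simps = to3_mult to3_add to3_diff to3_uminus to3_zero to3_one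

lemma PS3_eqI: "to3 f = to3 g \<Longrightarrow> f = g" by (simp add: to3_eq_iff)
lemma PS2_eqI: "to2 f = to2 g \<Longrightarrow> f = g" by (simp add: to2_eq_iff)
lemma cring_PS3: "cring (PS3 :: 'k::comm_ring_1 ps3 ring)"
proof (rule cringI)
  show "abelian_group (PS3 :: 'k ps3 ring)"
  proof (rule abelian_groupI)
    fix x :: "'k ps3" show "\<exists>y\<in>carrier PS3. y \<oplus>\<^bsub>PS3\<^esub> x = \<zero>\<^bsub>PS3\<^esub>"
      by (rule bexI[of _ "\<lambda>m. - x m"]) (auto simp: PS3_def)
  qed (auto simp: PS3_def add.assoc add.commute)
  show "Group.comm_monoid (PS3 :: 'k ps3 ring)"
    apply (rule comm_monoidI)
    apply (simp_all add: PS3_def)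
    apply (rule PS3_eqI, simp only: to3_simps, simp add: algebra_simps)+
    done
  fix x y z :: "'k ps3"
  show "(x \<oplus>\<^bsub>PS3\<^esub> y) \<otimes>\<^bsub>PS3\<^esub> z = x \<otimes>\<^bsub>PS3\<^esub> z \<oplus>\<^bsub>PS3\<^esub> y \<otimes>\<^bsub>PS3\<^esub> z"
    apply (simp add: PS3_def)
    apply (rule PS3_eqI, simp only: to3_simps, simp add: algebra_simps)
    done
qed

lemma cring_PS2: "cring (PS2 :: 'k::comm_ring_1 ps2 ring)"
proof (rule cringI)
  show "abelian_group (PS2 :: 'k ps2 ring)"
  proof (rule abelian_groupI)
    fix x :: "'k ps2" show "\<exists>y\<in>carrier PS2. y \<oplus>\<^bsub>PS2\<^esub> x = \<zero>\<^bsub>PS2\<^esub>"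
      by (rule bexI[of _ "\<lambda>m. - x m"]) (auto simp: PS2_def)
  qed (auto simp: PS2_def add.assoc add.commute)
  show "Group.comm_monoid (PS2 :: 'k ps2 ring)"
    apply (rule comm_monoidI)
    apply (simp_all add: PS2_def)
    apply (rule PS2_eqI, simp only: to2_simps, simp add: algebra_simps)+
    done
  fix x y z :: "'k ps2"
  show "(x \<oplus>\<^bsub>PS2\<^esub> y) \<otimes>\<^bsub>PS2\<^esub> z = x \<otimes>\<^bsub>PS2\<^esub> z \<oplus>\<^bsub>PS2\<^esub> y \<otimes>\<^bsub>PS2\<^esub> z"
    apply (simp add: PS2_def)
    apply (rule PS2_eqI, simp only: to2_simps, simp add: algebra_simps)
    done
qed



definition cmap :: "('a::zero \<Rightarrow> 'a) \<Rightarrow> 'a fps \<Rightarrow> 'a fps" where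
  "cmap D F = Abs_fps (\<lambda>n. D (F $ n))"

lemma cmap_nth[simp]: "cmap D F $ n = D (F $ n)"
  by (simp add: cmap_def)

definition is_der :: "('a::comm_ring_1 \<Rightarrow> 'a) \<Rightarrow> bool" where
  "is_der D \<longleftrightarrow> (\<forall>a b. D (a + b) = D a + D b) \<and> (\<forall>a b. D (a * b) = D a * b + a * D b)"

lemma is_der_add: "is_der D \<Longrightarrow> D (a + b) = D a + D b"
  by (simp add: is_der_def)
lemma is_der_mult: "is_der D \<Longrightarrow> D (a * b) = D a * b + a * D b"
  by (simp add: is_der_def)
lemma is_der_zero: "is_der D \<Longrightarrow> D 0 = 0"
  using is_der_add[of D 0 0] by simp
lemma is_der_one: "is_der D \<Longrightarrow> D 1 = 0"
  using is_der_mult[of D 1 1] by simp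
lemma is_der_uminus: "is_der D \<Longrightarrow> D (- a) = - D a"
  using is_der_add[of D a "-a"] is_der_zero[of D] by (simp add: eq_neg_iff_add_eq_0 add.commute)
lemma is_der_diff: "is_der D \<Longrightarrow> D (a - b) = D a - D b"
  using is_der_add[of D a "-b"] is_der_uminus[of D b] by simp
lemma is_der_sum: "is_der D \<Longrightarrow> D (sum f S) = (\<Sum>x\<in>S. D (f x))"
  by (induction S rule: infinite_finite_induct) (auto simp: is_der_zero is_der_add)

lemma is_der_fps_deriv: "is_der fps_deriv"
  by (simp add: is_der_def fps_deriv_mult algebra_simps)

lemma is_der_cmap: assumes "is_der D" shows "is_der (cmap D)"
  unfolding is_der_def
proof (intro conjI allI)
  fix a b :: "'a fps"
  show "cmap D (a + b) = cmap D a + cmap D b"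
    by (rule fps_ext) (simp add: is_der_add[OF assms])
  show "cmap D (a * b) = cmap D a * b + a * cmap D b"
    by (rule fps_ext) (simp add: fps_mult_nth is_der_sum[OF assms] is_der_mult[OF assms] sum.distrib)
qed

lemma cmap_const: "is_der D \<Longrightarrow> cmap D (fps_const c) = fps_const (D c)"
  by (rule fps_ext) (simp add: is_der_zero)
lemma cmap_X: "is_der D \<Longrightarrow> cmap D fps_X = 0"
  by (rule fps_ext) (simp add: is_der_zero is_der_one)

abbreviation "Y0 \<equiv> (fps_const (fps_const fps_X) :: 'k::comm_ring_1 fps fps fps)"
abbreviation "Y1 \<equiv> (fps_const fps_X :: 'k::comm_ring_1 fps fps fps)"
abbreviation "Y2 \<equiv> (fps_X :: 'k::comm_ring_1 fps fps fps)"
abbreviation "X0 \<equiv> (fps_const fps_X :: 'k::comm_ring_1 fps fps)"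
abbreviation "X1 \<equiv> (fps_X :: 'k::comm_ring_1 fps fps)"

abbreviation "D0 \<equiv> (cmap (cmap fps_deriv) :: 'k::comm_ring_1 fps fps fps \<Rightarrow> _)"
abbreviation "D1 \<equiv> (cmap fps_deriv :: 'k::comm_ring_1 fps fps fps \<Rightarrow> _)"
abbreviation "D2 \<equiv> (fps_deriv :: 'k::comm_ring_1 fps fps fps \<Rightarrow> _)"
abbreviation "Dx0 \<equiv> (cmap fps_deriv :: 'k::comm_ring_1 fps fps \<Rightarrow> _)"
abbreviation "Dx1 \<equiv> (fps_deriv :: 'k::comm_ring_1 fps fps \<Rightarrow> _)"

lemma der_D0: "is_der D0" and der_D1: "is_der D1" and der_D2: "is_der D2"
  and der_Dx0: "is_der Dx0" and der_Dx1: "is_der Dx1"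
  by (simp_all add: is_der_cmap is_der_fps_deriv)

lemma D_vars:
  "D0 Y0 = 1" "D0 Y1 = 0" "D0 Y2 = 0"
  "D1 Y0 = 0" "D1 Y1 = 1" "D1 Y2 = 0"
  "D2 Y0 = 0" "D2 Y1 = 0" "D2 Y2 = 1"
  "Dx0 X0 = 1" "Dx0 X1 = 0" "Dx1 X0 = 0" "Dx1 X1 = 1"
  by (simp_all add: cmap_const cmap_X is_der_cmap is_der_fps_deriv)

lemma to3_vars: "to3 y0 = Y0" "to3 y1 = Y1" "to3 y2 = Y2"
  by (rule fps_ext, rule fps_ext, rule fps_ext, simp add: y0_def y1_def y2_def)+
lemma to2_vars: "to2 x0 = X0" "to2 x1 = X1"
  by (rule fps_ext, rule fps_ext, simp add: x0_def x1_def)+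

lemma to3_d: "to3 (d3_0 f) = D0 (to3 f)" "to3 (d3_1 f) = D1 (to3 f)" "to3 (d3_2 f) = D2 (to3 f)"
  by (rule fps_ext, rule fps_ext, rule fps_ext, simp add: d3_0_def d3_1_def d3_2_def del: of_nat_Suc of_nat_add)+
lemma to2_d: "to2 (d2_0 f) = Dx0 (to2 f)" "to2 (d2_1 f) = Dx1 (to2 f)"
  by (rule fps_ext, rule fps_ext, simp add: d2_0_def d2_1_def del: of_nat_Suc of_nat_add)+

lemma to3_two: "to3 (\<lambda>n. 2 * f n) = 2 * to3 f"
proof -
  have "to3 (\<lambda>n. 2 * f n) = to3 (\<lambda>n. f n + f n)" by (simp only: mult_2)
  also have "\<dots> = to3 f + to3 f" by (rule to3_add)
  also have "\<dots> = 2 * to3 f" by (simp only: mult_2)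
  finally show ?thesis .
qed

definition Br3 :: "'k::comm_ring_1 fps fps fps \<Rightarrow> 'k fps fps fps \<Rightarrow> 'k fps fps fps" where
  "Br3 F G = Y0 * (D0 F * D1 G - D1 F * D0 G) + 2 * Y1 * (D0 F * D2 G - D2 F * D0 G)
     + Y2 * (D1 F * D2 G - D2 F * D1 G)"
definition B2 :: "'k::comm_ring_1 fps fps \<Rightarrow> 'k fps fps \<Rightarrow> 'k fps fps" where
  "B2 F G = - (Dx0 F * Dx1 G - Dx1 F * Dx0 G)"

lemma to3_P3: "to3 (P3_bracket f g) = Br3 (to3 f) (to3 g)"
  unfolding P3_bracket_def wedge3_def Br3_def
  by (simp only: to3_simps to3_two to3_d to3_vars mult.assoc)

lemma to2_B: "to2 (B_bracket f g) = B2 (to2 f) (to2 g)"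
proof -
  have "to2 (B_bracket f g) = - (to2 (ps2_mult (d2_0 f) (d2_1 g)) - to2 (ps2_mult (d2_1 f) (d2_0 g)))"
    by (rule fps_ext, rule fps_ext) (simp add: B_bracket_def)
  also have "\<dots> = B2 (to2 f) (to2 g)" unfolding B2_def to2_mult to2_d ..
  finally show ?thesis .
qed


section \<open>Monomial maps\<close>

definition cmul :: "('a::plus \<Rightarrow> 'k::comm_ring_1) \<Rightarrow> ('a \<Rightarrow> 'k) \<Rightarrow> 'a \<Rightarrow> 'k" where
  "cmul f g n = (\<Sum>pq\<in>{pq. fst pq + snd pq = n}. f (fst pq) * g (snd pq))"

definition mmap :: "('a \<Rightarrow> 'b) \<Rightarrow> ('a \<Rightarrow> 'k::comm_ring_1) \<Rightarrow> ('a \<Rightarrow> 'k) \<Rightarrow> 'b \<Rightarrow> 'k" where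
  "mmap e chi f m = (\<Sum>p\<in>{p. e p = m}. chi p * f p)"

lemma mmap_mult:
  fixes e :: "'a::comm_monoid_add \<Rightarrow> 'b::comm_monoid_add" and chi :: "'a \<Rightarrow> 'k::comm_ring_1"
  assumes finA: "\<And>n. finite {pq. fst pq + snd pq = (n::'a)}"
    and finB: "\<And>m. finite {pq. fst pq + snd pq = (m::'b)}"
    and fib: "\<And>m. finite {p. e p = m}"
    and eadd: "\<And>p q. e (p + q) = e p + e q"
    and chimul: "\<And>p q. chi (p + q) = chi p * chi q"
  shows "mmap e chi (cmul f g) m = cmul (mmap e chi f) (mmap e chi g) m"
proof -
  define P where "P = {pq. e (fst pq) + e (snd pq) = m}"
  define h where "h = (\<lambda>pq. chi (fst pq) * f (fst pq) * (chi (snd pq) * g (snd pq)))"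
  have P_eq: "P = (\<Union>n\<in>{n. e n = m}. {pq. fst pq + snd pq = n})"
    by (auto simp: P_def eadd[symmetric])
  have finP: "finite P" unfolding P_eq using finA fib by blast
  have "mmap e chi (cmul f g) m
      = (\<Sum>n\<in>{n. e n = m}. \<Sum>pq\<in>{pq. fst pq + snd pq = n}. chi n * (f (fst pq) * g (snd pq)))"
    by (simp add: mmap_def cmul_def sum_distrib_left)
  also have "\<dots> = (\<Sum>n\<in>{n. e n = m}. sum h {x. x \<in> P \<and> fst x + snd x = n})"
  proof (rule sum.cong[OF refl])
    fix n assume n: "n \<in> {n. e n = m}"
    have "{x. x \<in> P \<and> fst x + snd x = n} = {pq. fst pq + snd pq = n}"
      using n by (auto simp: P_def eadd[symmetric])
    then show "(\<Sum>pq\<in>{pq. fst pq + snd pq = n}. chi n * (f (fst pq) * g (snd pq)))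
        = sum h {x. x \<in> P \<and> fst x + snd x = n}"
      by (auto simp: h_def chimul mult_ac intro!: sum.cong)
  qed
  also have "\<dots> = sum h P"
    by (rule sum.group[OF finP fib]) (auto simp: P_def eadd)
  finally have L: "mmap e chi (cmul f g) m = sum h P" .
  have "cmul (mmap e chi f) (mmap e chi g) m
      = (\<Sum>mm\<in>{mm. fst mm + snd mm = m}. \<Sum>pq\<in>{p. e p = fst mm} \<times> {q. e q = snd mm}. h pq)"
    by (simp add: cmul_def mmap_def h_def sum_product sum.cartesian_product case_prod_beta)
  also have "\<dots> = (\<Sum>mm\<in>{mm. fst mm + snd mm = m}. sum h {x. x \<in> P \<and> (e (fst x), e (snd x)) = mm})"
  proof (rule sum.cong[OF refl])
    fix mm assume mm: "mm \<in> {mm. fst mm + snd mm = m}"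
    have "{x. x \<in> P \<and> (e (fst x), e (snd x)) = mm} = {p. e p = fst mm} \<times> {q. e q = snd mm}"
      using mm by (auto simp: P_def)
    then show "sum h ({p. e p = fst mm} \<times> {q. e q = snd mm}) = sum h {x. x \<in> P \<and> (e (fst x), e (snd x)) = mm}"
      by simp
  qed
  also have "\<dots> = sum h P"
    by (rule sum.group[OF finP finB]) (auto simp: P_def)
  finally show ?thesis using L by simp
qed

lemma box3_eq: "{pq. fst pq + snd pq = ((i,j,l)::nat\<times>nat\<times>nat)}
   = (\<lambda>(a,b,c). ((a,b,c),(i-a,j-b,l-c))) ` ({..i} \<times> {..j} \<times> {..l})" (is "?A = ?B")
proof
  show "?A \<subseteq> ?B"
  proof
    fix x assume xA: "x \<in> ?A"
    obtain a b c a' b' c' where x: "x = ((a,b,c),(a',b',c'))" by (metis prod.exhaust)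
    from xA have "a + a' = i" "b + b' = j" "c + c' = l" by (simp_all add: x add_Pair)
    then show "x \<in> ?B"
      by (auto simp: x image_iff intro!: bexI[of _ "(a,b,c)"])
  qed
  show "?B \<subseteq> ?A" by (auto simp: add_Pair)
qed

lemma box2_eq: "{pq. fst pq + snd pq = ((i,j)::nat\<times>nat)}
   = (\<lambda>(a,b). ((a,b),(i-a,j-b))) ` ({..i} \<times> {..j})" (is "?A = ?B")
proof
  show "?A \<subseteq> ?B"
  proof
    fix x assume xA: "x \<in> ?A"
    obtain a b a' b' where x: "x = ((a,b),(a',b'))" by (metis prod.exhaust)
    from xA have "a + a' = i" "b + b' = j" by (simp_all add: x add_Pair)
    then show "x \<in> ?B"
      by (auto simp: x image_iff intro!: bexI[of _ "(a,b)"])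
  qed
  show "?B \<subseteq> ?A" by (auto simp: add_Pair)
qed

lemma fin3: "finite {pq. fst pq + snd pq = (n::nat\<times>nat\<times>nat)}"
  by (cases n) (simp add: box3_eq)
lemma fin2: "finite {pq. fst pq + snd pq = (n::nat\<times>nat)}"
  by (cases n) (simp add: box2_eq)

lemma ps3_mult_cmul: "ps3_mult f g = cmul f g"
proof (rule ext)
  fix n :: "nat\<times>nat\<times>nat"
  obtain i j l where n: "n = (i,j,l)" by (metis prod.exhaust)
  have inj: "inj_on (\<lambda>(a,b,c). ((a,b,c),(i-a,j-b,l-c))) ({..i} \<times> {..j} \<times> {..l})"
    by (auto simp: inj_on_def)
  have "cmul f g n = (\<Sum>x\<in>{..i} \<times> {..j} \<times> {..l}. f x * g (i - fst x, j - fst (snd x), l - snd (snd x)))"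
    unfolding cmul_def n box3_eq by (subst sum.reindex[OF inj]) (auto simp: case_prod_beta intro!: sum.cong)
  also have "\<dots> = ps3_mult f g n"
    by (simp add: n ps3_mult_def sum.cartesian_product')
  finally show "ps3_mult f g n = cmul f g n" by simp
qed

lemma ps2_mult_cmul: "ps2_mult f g = cmul f g"
proof (rule ext)
  fix n :: "nat\<times>nat"
  obtain i j where n: "n = (i,j)" by (metis prod.exhaust)
  have inj: "inj_on (\<lambda>(a,b). ((a,b),(i-a,j-b))) ({..i} \<times> {..j})"
    by (auto simp: inj_on_def)
  have "cmul f g n = (\<Sum>x\<in>{..i} \<times> {..j}. f x * g (i - fst x, j - snd x))"
    unfolding cmul_def n box2_eq by (subst sum.reindex[OF inj]) (auto simp: case_prod_beta intro!: sum.cong)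
  also have "\<dots> = ps2_mult f g n"
    by (simp add: n ps2_mult_def sum.cartesian_product')
  finally show "ps2_mult f g n = cmul f g n" by simp
qed

definition ee :: "nat\<times>nat\<times>nat \<Rightarrow> nat\<times>nat" where "ee p = (case p of (a,b,c) \<Rightarrow> (a+b+c, b+2*c))"
definition chi :: "nat\<times>nat\<times>nat \<Rightarrow> 'k::comm_ring_1" where "chi p = (case p of (a,b,c) \<Rightarrow> (-1)^b)"
definition Phi :: "'k::comm_ring_1 ps3 \<Rightarrow> 'k ps2" where "Phi = mmap ee chi"

lemma ee_fib_fin: "finite {p. ee p = m}"
proof -
  obtain i j where m: "m = (i,j)" by (metis prod.exhaust)
  have "{p. ee p = m} \<subseteq> {..i} \<times> {..i} \<times> {..i}" by (auto simp: ee_def m)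
  then show ?thesis by (rule finite_subset) simp
qed

lemma ee_add: "ee (p + q) = ee p + ee q"
  by (cases p, cases q) (simp add: ee_def add_Pair)
lemma chi_add: "chi (p + q) = chi p * chi q"
  by (cases p, cases q) (simp add: chi_def add_Pair power_add)

lemma Phi_mult: "Phi (ps3_mult f g) = ps2_mult (Phi f) (Phi g)"
  unfolding Phi_def ps3_mult_cmul ps2_mult_cmul
  by (rule ext, rule mmap_mult[OF fin3 fin2 ee_fib_fin ee_add chi_add])


definition from3 :: "'k::comm_ring_1 fps fps fps \<Rightarrow> 'k ps3" where
  "from3 F = (\<lambda>(i,j,l). F $ l $ j $ i)"
definition from2 :: "'k::comm_ring_1 fps fps \<Rightarrow> 'k ps2" where
  "from2 F = (\<lambda>(i,j). F $ j $ i)"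

lemma to3_from3[simp]: "to3 (from3 F) = F"
  by (rule fps_ext, rule fps_ext, rule fps_ext) (simp add: from3_def)
lemma from3_to3[simp]: "from3 (to3 f) = f"
  by (rule ext) (auto simp: from3_def)
lemma to2_from2[simp]: "to2 (from2 F) = F"
  by (rule fps_ext, rule fps_ext) (simp add: from2_def)
lemma from2_to2[simp]: "from2 (to2 f) = f"
  by (rule ext) (auto simp: from2_def)

definition Phi' :: "'k::comm_ring_1 fps fps fps \<Rightarrow> 'k fps fps" where
  "Phi' F = to2 (Phi (from3 F))"

lemma to2_Phi: "to2 (Phi f) = Phi' (to3 f)"
  by (simp add: Phi'_def)

lemma Phi_add: "Phi (\<lambda>m. f m + g m) = (\<lambda>m. Phi f m + Phi g m)"
  by (rule ext) (simp add: Phi_def mmap_def sum.distrib ring_distribs)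
lemma Phi_diff: "Phi (\<lambda>m. f m - g m) = (\<lambda>m. Phi f m - Phi g m)"
  by (rule ext) (simp add: Phi_def mmap_def sum_subtractf ring_distribs)
lemma Phi_uminus: "Phi (\<lambda>m. - f m) = (\<lambda>m. - Phi f m)"
  by (rule ext) (simp add: Phi_def mmap_def sum_negf)
lemma Phi_zero: "Phi (\<lambda>m. 0) = (\<lambda>m. 0)"
  by (rule ext) (simp add: Phi_def mmap_def)

lemma Phi_mono: "Phi (\<lambda>p. if p = q then c else 0) = (\<lambda>m. if m = ee q then chi q * c else 0)"
proof (rule ext)
  fix m
  have "Phi (\<lambda>p. if p = q then c else 0) m = (\<Sum>p\<in>{p. ee p = m}. if p = q then chi q * c else 0)"
    by (simp add: Phi_def mmap_def if_distrib cong: if_cong)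
  also have "\<dots> = (if m = ee q then chi q * c else 0)"
    by (auto simp: ee_fib_fin)
  finally show "Phi (\<lambda>p. if p = q then c else 0) m = (if m = ee q then chi q * c else 0)" .
qed

lemma Phi'_mult: "Phi' (F * G) = Phi' F * Phi' G"
proof -
  have "F * G = to3 (ps3_mult (from3 F) (from3 G))" by (simp add: to3_mult)
  then show ?thesis unfolding Phi'_def by (simp add: Phi_mult to2_mult)
qed
lemma Phi'_add: "Phi' (F + G) = Phi' F + Phi' G"
proof -
  have "F + G = to3 (\<lambda>m. from3 F m + from3 G m)" by (simp add: to3_add)
  then show ?thesis unfolding Phi'_def by (simp add: Phi_add to2_add)
qed
lemma Phi'_diff: "Phi' (F - G) = Phi' F - Phi' G"
proof -
  have "F - G = to3 (\<lambda>m. from3 F m - from3 G m)" by (simp add: to3_diff)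
  then show ?thesis unfolding Phi'_def by (simp add: Phi_diff to2_diff)
qed
lemma Phi'_uminus: "Phi' (- F) = - Phi' F"
proof -
  have "- F = to3 (\<lambda>m. - from3 F m)" by (simp add: to3_uminus)
  then show ?thesis unfolding Phi'_def by (simp add: Phi_uminus to2_uminus)
qed
lemma from3_0: "from3 0 = (\<lambda>m. 0)"
  by (rule ext) (simp add: from3_def split: prod.splits)
lemma from3_1: "from3 1 = (\<lambda>p. if p = (0,0,0) then 1 else 0)"
  by (rule ext) (auto simp: from3_def fps_one_nth split: prod.splits)
lemma Phi'_zero: "Phi' 0 = 0"
  unfolding Phi'_def from3_0 Phi_zero to2_zero ..

lemma mono3_eq: "to3 (\<lambda>p. if p = (a,b,c) then v else 0) = Abs_fps (\<lambda>l. Abs_fps (\<lambda>j. Abs_fps (\<lambda>i. if (i,j,l) = (a,b,c) then v else 0)))"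
  by (simp add: to3_def)

lemma Phi'_one: "Phi' 1 = 1"
proof -
  have "Phi (from3 (1::'a fps fps fps)) = (\<lambda>m. if m = (0,0) then 1 else 0)"
    unfolding from3_1 Phi_mono by (simp add: ee_def chi_def cong: if_cong)
  then show ?thesis unfolding Phi'_def by (simp add: to2_one)
qed

lemma Phi'_Y0: "Phi' Y0 = X0"
  unfolding Phi'_def to3_vars[symmetric] from3_to3
  by (simp add: y0_def Phi_mono) (rule fps_ext, rule fps_ext, auto simp: ee_def chi_def)
lemma Phi'_Y1: "Phi' Y1 = - (X0 * X1)"
  unfolding Phi'_def to3_vars[symmetric] from3_to3
  by (simp add: y1_def Phi_mono) (rule fps_ext, rule fps_ext, auto simp: ee_def chi_def)
lemma Phi'_Y2: "Phi' Y2 = X0 * (X1 * X1)"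
  unfolding Phi'_def to3_vars[symmetric] from3_to3
  unfolding power2_eq_square[symmetric]
  by (simp add: y2_def Phi_mono) (rule fps_ext, rule fps_ext, auto simp: ee_def chi_def)


section \<open>Chain rule and Poisson property of Phi\<close>

lemma Euler3:
  "(Y0 * D0 F) $ l $ j $ i = of_nat i * F $ l $ j $ i"
  "(Y1 * D1 F) $ l $ j $ i = of_nat j * F $ l $ j $ i"
  "(Y2 * D2 F) $ l $ j $ i = of_nat l * F $ l $ j $ i"
  by (cases i; cases j; cases l; simp del: of_nat_Suc of_nat_add)+

lemma Euler2:
  "(X0 * Dx0 G) $ j $ i = of_nat i * G $ j $ i"
  "(X1 * Dx1 G) $ j $ i = of_nat j * G $ j $ i"
  by (cases i; cases j; simp del: of_nat_Suc of_nat_add)+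

lemma Phi'_nth: "Phi' F $ j $ i = (\<Sum>p\<in>{p. ee p = (i,j)}. chi p * from3 F p)"
  by (simp add: Phi'_def Phi_def mmap_def)

lemma Phi'_Euler0: "X0 * Dx0 (Phi' F) = Phi' (Y0 * D0 F) + Phi' (Y1 * D1 F) + Phi' (Y2 * D2 F)"
proof (rule fps_ext, rule fps_ext)
  fix j i
  have "(X0 * Dx0 (Phi' F)) $ j $ i = (\<Sum>p\<in>{p. ee p = (i,j)}. of_nat i * (chi p * from3 F p))"
    by (simp only: Euler2 Phi'_nth sum_distrib_left)
  also have "\<dots> = (\<Sum>p\<in>{p. ee p = (i,j)}. chi p * from3 (Y0 * D0 F) p + chi p * from3 (Y1 * D1 F) p
                    + chi p * from3 (Y2 * D2 F) p)"
  proof (rule sum.cong[OF refl])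
    fix p assume p: "p \<in> {p. ee p = (i,j)}"
    obtain a b c where pe: "p = (a,b,c)" by (metis prod.exhaust)
    from p have "i = a + b + c" by (simp add: pe ee_def)
    then show "of_nat i * (chi p * from3 F p) = chi p * from3 (Y0 * D0 F) p + chi p * from3 (Y1 * D1 F) p
                    + chi p * from3 (Y2 * D2 F) p"
      by (simp only: pe from3_def Euler3 prod.case of_nat_add) (simp add: algebra_simps)
  qed
  also have "\<dots> = (Phi' (Y0 * D0 F) + Phi' (Y1 * D1 F) + Phi' (Y2 * D2 F)) $ j $ i"
    by (simp only: fps_add_nth Phi'_nth sum.distrib)
  finally show "(X0 * Dx0 (Phi' F)) $ j $ i = (Phi' (Y0 * D0 F) + Phi' (Y1 * D1 F) + Phi' (Y2 * D2 F)) $ j $ i" .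
qed

lemma Phi'_Euler1: "X1 * Dx1 (Phi' F) = Phi' (Y1 * D1 F) + Phi' (Y2 * D2 F) + Phi' (Y2 * D2 F)"
proof (rule fps_ext, rule fps_ext)
  fix j i
  have "(X1 * Dx1 (Phi' F)) $ j $ i = (\<Sum>p\<in>{p. ee p = (i,j)}. of_nat j * (chi p * from3 F p))"
    by (simp only: Euler2 Phi'_nth sum_distrib_left)
  also have "\<dots> = (\<Sum>p\<in>{p. ee p = (i,j)}. chi p * from3 (Y1 * D1 F) p + chi p * from3 (Y2 * D2 F) p
                    + chi p * from3 (Y2 * D2 F) p)"
  proof (rule sum.cong[OF refl])
    fix p assume p: "p \<in> {p. ee p = (i,j)}"
    obtain a b c where pe: "p = (a,b,c)" by (metis prod.exhaust)
    from p have "j = b + c + c" by (simp add: pe ee_def)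
    then show "of_nat j * (chi p * from3 F p) = chi p * from3 (Y1 * D1 F) p + chi p * from3 (Y2 * D2 F) p
                    + chi p * from3 (Y2 * D2 F) p"
      by (simp only: pe from3_def Euler3 prod.case of_nat_add) (simp add: algebra_simps)
  qed
  also have "\<dots> = (Phi' (Y1 * D1 F) + Phi' (Y2 * D2 F) + Phi' (Y2 * D2 F)) $ j $ i"
    by (simp only: fps_add_nth Phi'_nth sum.distrib)
  finally show "(X1 * Dx1 (Phi' F)) $ j $ i = (Phi' (Y1 * D1 F) + Phi' (Y2 * D2 F) + Phi' (Y2 * D2 F)) $ j $ i" .
qed

lemma X0_nz: "(X0 :: 'k::{comm_ring_1,ring_no_zero_divisors} fps fps) \<noteq> 0"
proof
  assume "(X0 :: 'k fps fps) = 0"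
  then have "(X0 :: 'k fps fps) $ 0 $ 1 = 0" by simp
  then show False by simp
qed
lemma X1_nz: "(X1 :: 'k::{comm_ring_1,ring_no_zero_divisors} fps fps) \<noteq> 0"
proof
  assume "(X1 :: 'k fps fps) = 0"
  then have "(X1 :: 'k fps fps) $ 1 $ 0 = 0" by simp
  then show False by simp
qed

lemma alg_chain0: "(u::'a::comm_ring_1) * a0 + (- (u * v)) * a1 + u * (v * v) * a2 = u * (a0 - v * a1 + v * v * a2)"
  by (simp add: algebra_simps)
lemma alg_chain1: "(- ((u::'a::comm_ring_1) * v)) * a1 + u * (v * v) * a2 + u * (v * v) * a2 = v * (- (u * a1) + 2 * u * v * a2)"
  by (simp add: algebra_simps mult_2)
lemma alg_poisson: "(u::'a::comm_ring_1) * (a0 * b1 - a1 * b0) + 2 * (- (u * v)) * (a0 * b2 - a2 * b0) + u * (v * v) * (a1 * b2 - a2 * b1)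
  = - ((a0 - v * a1 + v * v * a2) * (- (u * b1) + 2 * u * v * b2) - (- (u * a1) + 2 * u * v * a2) * (b0 - v * b1 + v * v * b2))"
  by (simp add: algebra_simps)

lemma chain0: "Dx0 (Phi' (F :: 'k::idom fps fps fps)) = Phi' (D0 F) - X1 * Phi' (D1 F) + X1 * X1 * Phi' (D2 F)"
proof -
  have "X0 * Dx0 (Phi' F) = X0 * (Phi' (D0 F) - X1 * Phi' (D1 F) + X1 * X1 * Phi' (D2 F))"
    unfolding Phi'_Euler0 Phi'_mult Phi'_Y0 Phi'_Y1 Phi'_Y2 by (rule alg_chain0)
  then show ?thesis by (simp only: mult_left_cancel[OF X0_nz])
qed

lemma chain1: "Dx1 (Phi' (F :: 'k::idom fps fps fps)) = - (X0 * Phi' (D1 F)) + 2 * X0 * X1 * Phi' (D2 F)"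
proof -
  have "X1 * Dx1 (Phi' F) = X1 * (- (X0 * Phi' (D1 F)) + 2 * X0 * X1 * Phi' (D2 F))"
    unfolding Phi'_Euler1 Phi'_mult Phi'_Y0 Phi'_Y1 Phi'_Y2 by (rule alg_chain1)
  then show ?thesis by (simp only: mult_left_cancel[OF X1_nz])
qed

lemma Phi'_two: "Phi' 2 = 2"
  by (simp only: one_add_one[symmetric] Phi'_add Phi'_one)

lemma Phi'_poisson: "Phi' (Br3 F G) = B2 (Phi' F) (Phi' (G :: 'k::idom fps fps fps))"
  unfolding Br3_def B2_def chain0 chain1
  unfolding Phi'_add Phi'_diff Phi'_mult Phi'_two Phi'_Y0 Phi'_Y1 Phi'_Y2
  by (rule alg_poisson)


section \<open>The ideal and the bracket on representatives\<close>

definition gbr :: "'a::comm_ring_1 \<Rightarrow> 'a \<Rightarrow> 'a \<Rightarrow> 'a \<Rightarrow> 'a \<Rightarrow> 'a \<Rightarrow> 'a \<Rightarrow> 'a \<Rightarrow> 'a \<Rightarrow> 'a" where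
  "gbr z0 z1 z2 a0 a1 a2 b0 b1 b2 = z0 * (a0 * b1 - a1 * b0) + 2 * z1 * (a0 * b2 - a2 * b0) + z2 * (a1 * b2 - a2 * b1)"

lemma Br3_gbr: "Br3 F G = gbr Y0 Y1 Y2 (D0 F) (D1 F) (D2 F) (D0 G) (D1 G) (D2 G)"
  by (simp add: Br3_def gbr_def)

lemma gbr_antisym: "gbr z0 z1 z2 b0 b1 b2 a0 a1 a2 = - gbr z0 z1 z2 a0 a1 a2 b0 b1 b2"
  by (simp add: gbr_def algebra_simps)
lemma gbr_add2: "gbr z0 z1 z2 a0 a1 a2 (b0 + c0) (b1 + c1) (b2 + c2) = gbr z0 z1 z2 a0 a1 a2 b0 b1 b2 + gbr z0 z1 z2 a0 a1 a2 c0 c1 c2"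
  by (simp add: gbr_def algebra_simps)
lemma gbr_leib2: "gbr z0 z1 z2 a0 a1 a2 (s0 * t + s * t0) (s1 * t + s * t1) (s2 * t + s * t2)
   = s * gbr z0 z1 z2 a0 a1 a2 t0 t1 t2 + t * gbr z0 z1 z2 a0 a1 a2 s0 s1 s2"
  by (simp add: gbr_def algebra_simps)
lemma gbr_casimir: "gbr z0 z1 z2 a0 a1 a2 (- z2) (z1 + z1) (- z0) = 0"
  by (simp add: gbr_def algebra_simps)

lemma Br3_antisym: "Br3 G F = - Br3 F G"
  unfolding Br3_gbr by (rule gbr_antisym)
lemma Br3_add2: "Br3 F (G + H) = Br3 F G + Br3 F H"
  unfolding Br3_gbr by (simp only: is_der_add[OF der_D0] is_der_add[OF der_D1] is_der_add[OF der_D2] gbr_add2)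
lemma Br3_add1: "Br3 (G + H) F = Br3 G F + Br3 H F"
  by (metis Br3_antisym Br3_add2 minus_add_distrib)
lemma Br3_leib2: "Br3 F (S * T) = S * Br3 F T + T * Br3 F S"
  unfolding Br3_gbr by (simp only: is_der_mult[OF der_D0] is_der_mult[OF der_D1] is_der_mult[OF der_D2] gbr_leib2)

abbreviation "QQ \<equiv> (Y1 * Y1 - Y0 * Y2 :: 'k::comm_ring_1 fps fps fps)"

lemma D_QQ: "D0 QQ = - Y2" "D1 QQ = Y1 + Y1" "D2 QQ = - Y0"
  by (simp_all only: is_der_diff[OF der_D0] is_der_diff[OF der_D1] is_der_diff[OF der_D2]
      is_der_mult[OF der_D0] is_der_mult[OF der_D1] is_der_mult[OF der_D2] D_vars)
     (simp_all)

lemma Br3_casimir: "Br3 F QQ = 0"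
  unfolding Br3_gbr D_QQ by (rule gbr_casimir)

lemma Br3_ideal:
  "Br3 (F + R * QQ) (G + S * QQ) = Br3 F G + (Br3 F S - Br3 G R + Br3 (R * QQ) S) * QQ"
proof -
  have "Br3 (F + R * QQ) (G + S * QQ) = Br3 F G + Br3 F (S * QQ) + (Br3 (R * QQ) G + Br3 (R * QQ) (S * QQ))"
    by (simp only: Br3_add1 Br3_add2 add_ac)
  also have "Br3 F (S * QQ) = QQ * Br3 F S"
    by (simp only: Br3_leib2 Br3_casimir mult_zero_right add_0_left)
  also have "Br3 (R * QQ) G = - (QQ * Br3 G R)"
    by (simp only: Br3_antisym[of "R * QQ" G] Br3_leib2 Br3_casimir mult_zero_right add_0_left)
  also have "Br3 (R * QQ) (S * QQ) = QQ * Br3 (R * QQ) S"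
    by (simp only: Br3_leib2 Br3_casimir mult_zero_right add_0_left)
  finally show ?thesis by (simp add: algebra_simps)
qed

lemma to3_q: "to3 (\<lambda>m. ps3_mult y1 y1 m - ps3_mult y0 y2 m) = QQ"
  by (simp only: to3_diff to3_mult to3_vars)

lemma mem_PIdl: "h \<in> cgenideal PS3 (\<lambda>m. ps3_mult y1 y1 m - ps3_mult y0 y2 m) \<longleftrightarrow> (\<exists>R. to3 h = R * QQ)"
proof -
  have "h \<in> cgenideal PS3 (\<lambda>m. ps3_mult y1 y1 m - ps3_mult y0 y2 m) \<longleftrightarrow>
        (\<exists>x. h = ps3_mult x (\<lambda>m. ps3_mult y1 y1 m - ps3_mult y0 y2 m))"
    by (auto simp: cgenideal_def PS3_def)
  also have "\<dots> \<longleftrightarrow> (\<exists>R. to3 h = R * QQ)"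
  proof
    assume "\<exists>x. h = ps3_mult x (\<lambda>m. ps3_mult y1 y1 m - ps3_mult y0 y2 m)"
    then show "\<exists>R. to3 h = R * QQ" by (auto simp: to3_mult to3_q)
  next
    assume "\<exists>R. to3 h = R * QQ"
    then obtain R where R: "to3 h = R * QQ" by blast
    have "to3 h = to3 (ps3_mult (from3 R) (\<lambda>m. ps3_mult y1 y1 m - ps3_mult y0 y2 m))"
      by (simp add: R to3_mult to3_q)
    then show "\<exists>x. h = ps3_mult x (\<lambda>m. ps3_mult y1 y1 m - ps3_mult y0 y2 m)"
      by (auto simp: to3_eq_iff)
  qed
  finally show ?thesis .
qed

lemma A_ideal_eq: "(A_ideal :: 'k::comm_ring_1 ps3 set) = {h. \<exists>R. to3 h = R * QQ}"
proof -
  have "(A_ideal :: 'k ps3 set) = cgenideal PS3 (\<lambda>m. ps3_mult y1 y1 m - ps3_mult y0 y2 m)"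
    unfolding A_ideal_def by (rule cring.cgenideal_eq_genideal[OF cring_PS3, symmetric]) (simp add: PS3_def)
  then show ?thesis using mem_PIdl by blast
qed

lemma ideal_A: "ideal (A_ideal :: 'k::comm_ring_1 ps3 set) PS3"
  unfolding A_ideal_def
  by (rule ring.genideal_ideal[OF cring.axioms(1)[OF cring_PS3]]) (simp add: PS3_def)

lemma A_cls_mem: "a \<in> A_cls f \<longleftrightarrow> (\<exists>h\<in>A_ideal. a = (\<lambda>m. h m + f m))"
  by (auto simp: A_cls_def a_r_coset_def r_coset_def PS3_def)

lemma A_cls_to3: "a \<in> A_cls f \<longleftrightarrow> (\<exists>R. to3 a = to3 f + R * QQ)"
proof -
  have "a \<in> A_cls f \<longleftrightarrow> (\<exists>h. (\<exists>R. to3 h = R * QQ) \<and> a = (\<lambda>m. h m + f m))"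
    by (simp add: A_cls_mem A_ideal_eq)
  also have "\<dots> \<longleftrightarrow> (\<exists>R. to3 a = to3 f + R * QQ)"
  proof
    assume "\<exists>h. (\<exists>R. to3 h = R * QQ) \<and> a = (\<lambda>m. h m + f m)"
    then show "\<exists>R. to3 a = to3 f + R * QQ" by (auto simp: to3_add)
  next
    assume "\<exists>R. to3 a = to3 f + R * QQ"
    then obtain R where R: "to3 a = to3 f + R * QQ" by blast
    have "to3 a = to3 (\<lambda>m. from3 (R * QQ) m + f m)" by (simp add: R to3_add)
    then have "a = (\<lambda>m. from3 (R * QQ) m + f m)" by (simp add: to3_eq_iff)
    then show "\<exists>h. (\<exists>R. to3 h = R * QQ) \<and> a = (\<lambda>m. h m + f m)" by (intro exI[of _ "from3 (R * QQ)"]) auto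
  qed
  finally show ?thesis .
qed

lemma P3_cls: assumes "a \<in> A_cls f" "b \<in> A_cls g"
  shows "P3_bracket a b \<in> A_cls (P3_bracket f g)"
proof -
  obtain R where R: "to3 a = to3 f + R * QQ" using assms(1) A_cls_to3 by blast
  obtain S where S: "to3 b = to3 g + S * QQ" using assms(2) A_cls_to3 by blast
  show ?thesis unfolding A_cls_to3 to3_P3 R S Br3_ideal by blast
qed


section \<open>Existence\<close>

definition phi :: "'k::comm_ring_1 ps3 set \<Rightarrow> 'k ps2" where
  "phi X = Phi (SOME a. a \<in> X)"

lemma alg_QQ: "(- ((u::'a::comm_ring_1) * v)) * (- (u * v)) - u * (u * (v * v)) = 0"
  by (simp add: algebra_simps)

lemma Phi'_QQ: "Phi' QQ = 0"
  unfolding Phi'_diff Phi'_mult Phi'_Y0 Phi'_Y1 Phi'_Y2 by (rule alg_QQ)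

lemma self_in_cls: "f \<in> A_cls f"
  unfolding A_cls_to3 by (rule exI[of _ 0]) simp

lemma Phi_cls: assumes "a \<in> A_cls f" shows "Phi a = Phi f"
proof -
  obtain R where R: "to3 a = to3 f + R * QQ" using assms A_cls_to3 by blast
  have "to2 (Phi a) = to2 (Phi f)"
    unfolding to2_Phi R Phi'_add Phi'_mult Phi'_QQ by simp
  then show ?thesis by (simp add: to2_eq_iff)
qed

lemma phi_cls: "phi (A_cls f) = Phi f"
  unfolding phi_def by (metis Phi_cls self_in_cls someI)

lemma carrier_A: "X \<in> carrier A_ring \<Longrightarrow> \<exists>f. X = A_cls f"
  by (auto simp: A_ring_def FactRing_def A_RCOSETS_def' A_cls_def PS3_def)

lemma A_cls_hom: "A_cls \<in> ring_hom PS3 A_ring"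
proof -
  have "(\<lambda>f. A_ideal +>\<^bsub>PS3\<^esub> f) \<in> ring_hom PS3 (PS3 Quot A_ideal)"
    using ideal.rcos_ring_hom[OF ideal_A] by simp
  then show ?thesis unfolding A_cls_def[abs_def] A_ring_def .
qed

lemma A_cls_mult: "A_cls (ps3_mult f g) = A_cls f \<otimes>\<^bsub>A_ring\<^esub> A_cls g"
  using ring_hom_mult[OF A_cls_hom, of f g] by (simp add: PS3_def)
lemma A_cls_add: "A_cls (\<lambda>m. f m + g m) = A_cls f \<oplus>\<^bsub>A_ring\<^esub> A_cls g"
  using ring_hom_add[OF A_cls_hom, of f g] by (simp add: PS3_def)
lemma A_cls_one: "A_cls (\<lambda>m. if m = (0,0,0) then 1 else 0) = \<one>\<^bsub>A_ring\<^esub>"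
  using ring_hom_one[OF A_cls_hom] by (simp add: PS3_def)

lemma Phi_mult': "Phi (ps3_mult f g) = ps2_mult (Phi f) (Phi g)"
  by (rule Phi_mult)
lemma Phi_add': "Phi (\<lambda>m. f m + g m) = (\<lambda>m. Phi f m + Phi g m)"
  by (rule Phi_add)
lemma Phi_one: "Phi (\<lambda>m. if m = (0,0,0) then 1 else 0) = (\<lambda>m. if m = (0,0) then 1 else 0)"
  unfolding Phi_mono by (simp add: ee_def chi_def cong: if_cong)

lemma phi_hom: "(phi :: 'k::comm_ring_1 ps3 set \<Rightarrow> 'k ps2) \<in> ring_hom A_ring PS2"
proof (rule ring_hom_memI)
  fix X Y :: "'k ps3 set" assume X: "X \<in> carrier A_ring" and Y: "Y \<in> carrier A_ring"
  obtain f where f: "X = A_cls f" using carrier_A[OF X] by blast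
  obtain g where g: "Y = A_cls g" using carrier_A[OF Y] by blast
  show "phi (X \<otimes>\<^bsub>A_ring\<^esub> Y) = phi X \<otimes>\<^bsub>PS2\<^esub> phi Y"
    unfolding f g A_cls_mult[symmetric] phi_cls by (simp add: PS2_def Phi_mult)
  show "phi (X \<oplus>\<^bsub>A_ring\<^esub> Y) = phi X \<oplus>\<^bsub>PS2\<^esub> phi Y"
    unfolding f g A_cls_add[symmetric] phi_cls by (simp add: PS2_def Phi_add)
next
  show "phi \<one>\<^bsub>A_ring\<^esub> = \<one>\<^bsub>PS2\<^esub>"
    unfolding A_cls_one[symmetric] phi_cls by (simp add: PS2_def Phi_one)
qed (simp add: PS2_def)

definition ser :: "'k::comm_ring_1 fps \<Rightarrow> 'k ps3" where
  "ser h = (\<lambda>(i,j,l). if j = 0 \<and> l = 0 then h $ i else 0)"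

lemma iotaA_ser: "iotaA h = A_cls (ser h)"
  by (simp add: iotaA_def ser_def)

lemma Phi_ser: "Phi (ser h) = iotaB h"
proof (rule ext, clarify)
  fix i j
  have "Phi (ser h) (i,j) = (\<Sum>p\<in>{p. ee p = (i,j)}. if p = (i,0,0) then (if j = 0 then h $ i else 0) else 0)"
    unfolding Phi_def mmap_def
  proof (rule sum.cong[OF refl])
    fix p assume p: "p \<in> {p. ee p = (i,j)}"
    obtain a b c where pe: "p = (a,b,c)" by (metis prod.exhaust)
    from p have "a + b + c = i" "b + 2 * c = j" by (simp_all add: pe ee_def)
    then show "chi p * ser h p = (if p = (i,0,0) then (if j = 0 then h $ i else 0) else 0)"
      by (auto simp: pe chi_def ser_def)
  qed
  also have "\<dots> = iotaB h (i,j)"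
    by (simp add: ee_fib_fin iotaB_def) (simp add: ee_def)
  finally show "Phi (ser h) (i,j) = iotaB h (i,j)" .
qed

lemma phi_kx: "is_kx_alg_hom phi"
  unfolding is_kx_alg_hom_def using phi_hom by (simp add: iotaA_ser phi_cls Phi_ser)

lemma Phi_y0: "Phi y0 = x0"
  by (simp add: to2_eq_iff[symmetric] to2_Phi to3_vars to2_vars Phi'_Y0)
lemma Phi_y1: "Phi y1 = (\<lambda>m. - ps2_mult x0 x1 m)"
  by (simp only: to2_eq_iff[symmetric] to2_Phi to3_vars to2_vars Phi'_Y1 to2_uminus to2_mult)
lemma Phi_y2: "Phi y2 = ps2_mult x0 (ps2_mult x1 x1)"
  by (simp only: to2_eq_iff[symmetric] to2_Phi to3_vars to2_vars Phi'_Y2 to2_mult)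

lemma x0x1_nth: "ps2_mult x0 x1 (i,j) = (if i = 1 \<and> j = 1 then 1 else 0)"
proof -
  have "ps2_mult x0 x1 (i,j) = to2 (ps2_mult x0 x1) $ j $ i" by simp
  also have "\<dots> = (if i = 1 \<and> j = 1 then 1 else 0)" by (simp only: to2_mult to2_vars) simp
  finally show ?thesis .
qed
lemma x0x1x1_nth: "ps2_mult x0 (ps2_mult x1 x1) (i,j) = (if i = 1 \<and> j = 2 then 1 else 0)"
proof -
  have "ps2_mult x0 (ps2_mult x1 x1) (i,j) = to2 (ps2_mult x0 (ps2_mult x1 x1)) $ j $ i" by simp
  also have "\<dots> = (if i = 1 \<and> j = 2 then 1 else 0)"
    by (simp only: to2_mult to2_vars power2_eq_square[symmetric]) simp
  finally show ?thesis .
qed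

lemma phi_grading: "grading_preserving phi"
  unfolding grading_preserving_def phi_cls Phi_y0 Phi_y1 Phi_y2 B_homog_def
  by (simp add: x0x1_nth x0x1x1_nth) (simp add: x0_def)

lemma phi_poisson: "is_poisson (phi :: 'k::idom ps3 set \<Rightarrow> 'k ps2)"
  unfolding is_poisson_def
proof (intro ballI)
  fix X Y :: "'k ps3 set"
  define a where "a = (SOME a. a \<in> X)"
  define b where "b = (SOME b. b \<in> Y)"
  have "phi (A_bracket X Y) = Phi (P3_bracket a b)"
    by (simp add: A_bracket_def phi_cls a_def b_def)
  also have "\<dots> = B_bracket (Phi a) (Phi b)"
    by (simp add: to2_eq_iff[symmetric] to2_Phi to3_P3 to2_B Phi'_poisson)
  also have "\<dots> = B_bracket (phi X) (phi Y)"
    by (simp add: phi_def a_def b_def)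
  finally show "phi (A_bracket X Y) = B_bracket (phi X) (phi Y)" .
qed


section \<open>Uniqueness\<close>

lemma cls_eq: assumes "a \<in> A_cls f" shows "A_cls a = A_cls f"
proof -
  obtain R0 where R0: "to3 a = to3 f + R0 * QQ" using assms A_cls_to3 by blast
  show ?thesis
  proof (intro equalityI subsetI)
    fix x assume "x \<in> A_cls a"
    then obtain R where "to3 x = to3 a + R * QQ" using A_cls_to3 by blast
    then have "to3 x = to3 f + (R0 + R) * QQ" by (simp add: R0 algebra_simps)
    then show "x \<in> A_cls f" using A_cls_to3 by blast
  next
    fix x assume "x \<in> A_cls f"
    then obtain R where "to3 x = to3 f + R * QQ" using A_cls_to3 by blast
    then have "to3 x = to3 a + (R - R0) * QQ" by (simp add: R0 algebra_simps)
    then show "x \<in> A_cls a" using A_cls_to3 by blast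
  qed
qed

lemma A_bracket_cls: "A_bracket (A_cls f) (A_cls g) = A_cls (P3_bracket f g)"
proof -
  have a: "(SOME a. a \<in> A_cls f) \<in> A_cls f" by (metis someI self_in_cls)
  have b: "(SOME b. b \<in> A_cls g) \<in> A_cls g" by (metis someI self_in_cls)
  show ?thesis unfolding A_bracket_def by (rule cls_eq, rule P3_cls[OF a b])
qed

definition PsiP :: "('k::comm_ring_1 ps3 set \<Rightarrow> 'k ps2) \<Rightarrow> 'k fps fps fps \<Rightarrow> 'k fps fps" where
  "PsiP psi F = to2 (psi (A_cls (from3 F)))"

lemma to2_psi: "to2 (psi (A_cls f)) = PsiP psi (to3 f)"
  by (simp add: PsiP_def)

lemma A_cls_carrier: "A_cls f \<in> carrier A_ring"
  using ring_hom_closed[OF A_cls_hom] by (simp add: PS3_def)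

lemma from3_mult: "from3 (F * G) = ps3_mult (from3 F) (from3 G)"
  by (simp add: to3_eq_iff[symmetric] to3_mult)
lemma from3_add: "from3 (F + G) = (\<lambda>m. from3 F m + from3 G m)"
  by (simp add: to3_eq_iff[symmetric] to3_add)

lemma PsiP_mult: assumes "psi \<in> ring_hom A_ring PS2"
  shows "PsiP psi (F * G) = PsiP psi F * PsiP psi G"
  unfolding PsiP_def from3_mult A_cls_mult ring_hom_mult[OF assms A_cls_carrier A_cls_carrier]
  by (simp add: PS2_def to2_mult)
lemma PsiP_add: assumes "psi \<in> ring_hom A_ring PS2"
  shows "PsiP psi (F + G) = PsiP psi F + PsiP psi G"
  unfolding PsiP_def from3_add A_cls_add ring_hom_add[OF assms A_cls_carrier A_cls_carrier]
  by (simp add: PS2_def to2_add)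

lemma to3_ser: "to3 (ser h) = fps_const (fps_const h)"
  by (rule fps_ext, rule fps_ext, rule fps_ext) (simp add: ser_def)
lemma to2_iotaB: "to2 (iotaB h) = fps_const h"
  by (rule fps_ext, rule fps_ext) (simp add: iotaB_def)

lemma PsiP_const: assumes "\<forall>h. psi (iotaA h) = iotaB h"
  shows "PsiP psi (fps_const (fps_const h)) = fps_const h"
  using assms unfolding PsiP_def to3_ser[symmetric] from3_to3 iotaA_ser[symmetric]
  by (simp add: to2_iotaB)

lemma Phi'_const: "Phi' (fps_const (fps_const h)) = fps_const h"
  unfolding to3_ser[symmetric] to2_Phi[symmetric] Phi_ser to2_iotaB ..

definition lowx0 :: "nat \<Rightarrow> 'k::comm_ring_1 fps fps \<Rightarrow> bool" where
  "lowx0 N G \<longleftrightarrow> (\<forall>j i. i < N \<longrightarrow> G $ j $ i = 0)"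

lemma lowx0_add: "lowx0 N A \<Longrightarrow> lowx0 N B \<Longrightarrow> lowx0 N (A + B)"
  by (simp add: lowx0_def)
lemma lowx0_mult: assumes "lowx0 N D" shows "lowx0 N (U * D)"
  unfolding lowx0_def
proof (intro allI impI)
  fix j i assume i: "i < N"
  have "(U * D) $ j $ i = (\<Sum>b = 0..j. \<Sum>a = 0..i. U $ b $ a * D $ (j - b) $ (i - a))"
    by (simp add: fps_mult_nth fps_sum_nth)
  also have "\<dots> = 0"
    using assms i by (intro sum.neutral ballI) (simp add: lowx0_def)
  finally show "(U * D) $ j $ i = 0" .
qed
lemma lowx0_X0: assumes "lowx0 N D" shows "lowx0 (Suc N) (X0 * U * D)"
proof -
  have L: "lowx0 N (U * D)" by (rule lowx0_mult[OF assms])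
  show ?thesis unfolding lowx0_def
  proof (intro allI impI)
    fix j i assume "i < Suc N"
    then show "(X0 * U * D) $ j $ i = 0"
      using L by (cases i) (simp_all add: lowx0_def mult.assoc)
  qed
qed

lemma decomp: "F = fps_const (fps_const (fps_const (F $ 0 $ 0 $ 0)))
   + Y0 * fps_const (fps_const (fps_shift 1 (F $ 0 $ 0)))
   + Y1 * fps_const (fps_shift 1 (F $ 0)) + Y2 * fps_shift 1 F"
  by (rule fps_ext, rule fps_ext, rule fps_ext) (auto split: nat.splits)

lemma alg_dec: "((c::'a::comm_ring_1) + u * a + (- (u * v)) * b + u * (v * v) * d)
   - (c + u * a' + (- (u * v)) * b' + u * (v * v) * d')
   = u * 1 * (a - a') + u * (- v) * (b - b') + u * (v * v) * (d - d')"
  by (simp add: algebra_simps)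

lemma unique_core:
  assumes hom: "psi \<in> ring_hom A_ring PS2"
    and kx: "\<forall>h. psi (iotaA h) = iotaB h"
    and v0: "PsiP psi Y0 = X0" and v1: "PsiP psi Y1 = - (X0 * X1)" and v2: "PsiP psi Y2 = X0 * (X1 * X1)"
  shows "PsiP psi F = Phi' (F :: 'k::comm_ring_1 fps fps fps)"
proof -
  have low: "\<forall>F. lowx0 N (PsiP psi F - Phi' F)" for N
  proof (induction N)
    case 0 then show ?case by (simp add: lowx0_def)
  next
    case (Suc N)
    show ?case
    proof
      fix F
      define c where "c = (fps_const (fps_const (fps_const (F $ 0 $ 0 $ 0))) :: 'k fps fps fps)"
      define A where "A = (fps_const (fps_const (fps_shift 1 (F $ 0 $ 0))) :: 'k fps fps fps)"
      define B where "B = (fps_const (fps_shift 1 (F $ 0)) :: 'k fps fps fps)"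
      define C where "C = fps_shift 1 F"
      have F: "F = c + Y0 * A + Y1 * B + Y2 * C"
        unfolding c_def A_def B_def C_def by (rule decomp)
      have pc: "PsiP psi c = Phi' c"
        unfolding c_def PsiP_const[OF kx] Phi'_const ..
      have "PsiP psi F - Phi' F = X0 * 1 * (PsiP psi A - Phi' A) + X0 * (- X1) * (PsiP psi B - Phi' B)
          + X0 * (X1 * X1) * (PsiP psi C - Phi' C)"
        unfolding F PsiP_add[OF hom] PsiP_mult[OF hom] Phi'_add Phi'_mult v0 v1 v2 Phi'_Y0 Phi'_Y1 Phi'_Y2 pc
        by (rule alg_dec)
      also have "lowx0 (Suc N) \<dots>"
        using Suc.IH by (intro lowx0_add lowx0_X0) auto
      finally show "lowx0 (Suc N) (PsiP psi F - Phi' F)" .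
    qed
  qed
  show ?thesis
  proof (rule fps_ext, rule fps_ext)
    fix j i
    have "(PsiP psi F - Phi' F) $ j $ i = 0" using low[of "Suc i"] by (simp add: lowx0_def)
    then show "PsiP psi F $ j $ i = Phi' F $ j $ i" by simp
  qed
qed


lemma Br3_Y0Y1: "Br3 Y0 Y1 = Y0"
  by (simp only: Br3_def D_vars mult_1_right mult_1_left mult_zero_left mult_zero_right diff_zero diff_self add_0_right add_0_left minus_zero zero_diff)
lemma Br3_Y0Y2: "Br3 Y0 Y2 = Y1 + Y1"
  by (simp only: Br3_def D_vars mult_1_right mult_1_left mult_zero_left mult_zero_right diff_zero diff_self add_0_right add_0_left minus_zero zero_diff mult_2)

lemma B2_X0: "B2 X0 G = - Dx1 G"
  by (simp only: B2_def D_vars mult_1_right mult_1_left mult_zero_left mult_zero_right diff_zero diff_self add_0_right add_0_left minus_zero zero_diff)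

lemma alg_two: "- (a::'k::field_char_0) - a = - (of_nat 2 * h) \<Longrightarrow> h = a"
proof -
  assume "- a - a = - (of_nat 2 * h)"
  then have "of_nat 2 * h = of_nat 2 * a" by (simp add: algebra_simps mult_2)
  then show "h = a" by (subst (asm) mult_cancel_left) simp
qed

lemma psi_vals:
  fixes psi :: "'k::field_char_0 ps3 set \<Rightarrow> 'k ps2"
  assumes hom: "psi \<in> ring_hom A_ring PS2"
    and kx: "\<forall>h. psi (iotaA h) = iotaB h"
    and gr: "grading_preserving psi" and po: "is_poisson psi"
  shows "PsiP psi Y1 = - (X0 * X1)" "PsiP psi Y2 = X0 * (X1 * X1)"
proof -
  have v0: "PsiP psi Y0 = X0" by (rule PsiP_const[OF kx])
  define G where "G = PsiP psi Y1"
  define H where "H = PsiP psi Y2"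
  have tG: "to2 (psi (A_cls y1)) = G" by (simp add: G_def to2_psi to3_vars)
  have tH: "to2 (psi (A_cls y2)) = H" by (simp add: H_def to2_psi to3_vars)
  have t0: "to2 (psi (A_cls y0)) = X0" using v0 by (simp add: to2_psi to3_vars)
  have p1: "psi (A_bracket (A_cls y0) (A_cls y1)) = B_bracket (psi (A_cls y0)) (psi (A_cls y1))"
    using po A_cls_carrier unfolding is_poisson_def by blast
  have p2: "psi (A_bracket (A_cls y0) (A_cls y2)) = B_bracket (psi (A_cls y0)) (psi (A_cls y2))"
    using po A_cls_carrier unfolding is_poisson_def by blast
  have e1: "X0 = - Dx1 G"
  proof -
    have "to2 (psi (A_bracket (A_cls y0) (A_cls y1))) = to2 (B_bracket (psi (A_cls y0)) (psi (A_cls y1)))"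
      using p1 by simp
    then show ?thesis
      unfolding A_bracket_cls to2_B to2_psi to3_P3 to3_vars Br3_Y0Y1 v0 G_def[symmetric] B2_X0 .
  qed
  have e2: "G + G = - Dx1 H"
  proof -
    have "to2 (psi (A_bracket (A_cls y0) (A_cls y2))) = to2 (B_bracket (psi (A_cls y0)) (psi (A_cls y2)))"
      using p2 by simp
    then show ?thesis
      unfolding A_bracket_cls to2_B to2_psi to3_P3 to3_vars Br3_Y0Y2 PsiP_add[OF hom] v0 G_def[symmetric] H_def[symmetric] B2_X0 .
  qed
  have gG: "G $ j $ i = 0" if "j \<noteq> 1" for i j
  proof -
    have "G $ j $ i = psi (A_cls y1) (i, j)" by (simp add: tG[symmetric])
    then show ?thesis using gr that by (auto simp: grading_preserving_def B_homog_def)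
  qed
  have gH: "H $ j $ i = 0" if "j \<noteq> 2" for i j
  proof -
    have "H $ j $ i = psi (A_cls y2) (i, j)" by (simp add: tH[symmetric])
    then show ?thesis using gr that by (auto simp: grading_preserving_def B_homog_def)
  qed
  have G1: "G $ 1 $ i = - (fps_X $ i)" for i
  proof -
    have "X0 $ 0 $ i = (- Dx1 G) $ 0 $ i" using e1 by simp
    then show ?thesis by simp
  qed
  have G1': "G $ Suc 0 $ i = - (fps_X $ i)" for i using G1[of i] by simp
  show "PsiP psi Y1 = - (X0 * X1)"
    unfolding G_def[symmetric]
  proof (rule fps_ext, rule fps_ext)
    fix j i
    show "G $ j $ i = (- (X0 * X1)) $ j $ i"
      by (cases "j = 1") (simp_all add: G1' gG)
  qed
  have H2: "H $ 2 $ i = fps_X $ i" for i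
  proof -
    have "(G + G) $ 1 $ i = (- Dx1 H) $ 1 $ i" using e2 by (simp only:)
    then have "G $ 1 $ i + G $ 1 $ i = - (of_nat (1 + 1) * H $ (1 + 1) $ i)"
      by (simp only: fps_add_nth fps_neg_nth fps_deriv_nth fps_mult_of_nat_nth)
    then have "- (fps_X $ i) - fps_X $ i = - (of_nat 2 * H $ 2 $ i)"
      by (simp only: G1 one_add_one) simp
    then show ?thesis by (rule alg_two)
  qed
  have H2': "H $ Suc (Suc 0) $ i = fps_X $ i" for i using H2[of i] by (simp add: numeral_2_eq_2)
  show "PsiP psi Y2 = X0 * (X1 * X1)"
    unfolding H_def[symmetric]
  proof (rule fps_ext, rule fps_ext)
    fix j i
    show "H $ j $ i = (X0 * (X1 * X1)) $ j $ i"
      unfolding power2_eq_square[symmetric]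
      by (cases "j = 2") (simp_all add: H2 H2' gH)
  qed
qed

theorem theorem3:
  shows "\<exists>\<phi> :: 'k::field_char_0 ps3 set \<Rightarrow> 'k ps2.
           is_kx_alg_hom \<phi> \<and> grading_preserving \<phi> \<and> is_poisson \<phi>
         \<and> \<phi> (A_cls y0) = x0
         \<and> \<phi> (A_cls y1) = (\<lambda>m. - ps2_mult x0 x1 m)
         \<and> \<phi> (A_cls y2) = ps2_mult x0 (ps2_mult x1 x1)
         \<and> (\<forall>\<psi>. is_kx_alg_hom \<psi> \<and> grading_preserving \<psi> \<and> is_poisson \<psi>
                \<longrightarrow> (\<forall>X\<in>carrier A_ring. \<psi> X = \<phi> X))"
proof (intro exI[of _ phi] conjI allI impI ballI)
  show "is_kx_alg_hom (phi :: 'k ps3 set \<Rightarrow> 'k ps2)" by (rule phi_kx)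
  show "grading_preserving (phi :: 'k ps3 set \<Rightarrow> 'k ps2)" by (rule phi_grading)
  show "is_poisson (phi :: 'k ps3 set \<Rightarrow> 'k ps2)" by (rule phi_poisson)
  show "phi (A_cls y0) = (x0 :: 'k ps2)" by (simp add: phi_cls Phi_y0)
  show "phi (A_cls y1) = (\<lambda>m. - ps2_mult x0 x1 m :: 'k)" by (simp add: phi_cls Phi_y1)
  show "phi (A_cls y2) = (ps2_mult x0 (ps2_mult x1 x1) :: 'k ps2)" by (simp add: phi_cls Phi_y2)
next
  fix psi :: "'k ps3 set \<Rightarrow> 'k ps2" and X :: "'k ps3 set"
  assume A: "is_kx_alg_hom psi \<and> grading_preserving psi \<and> is_poisson psi"
    and X: "X \<in> carrier A_ring"
  then have hom: "psi \<in> ring_hom A_ring PS2" and kx: "\<forall>h. psi (iotaA h) = iotaB h"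
    by (simp_all add: is_kx_alg_hom_def)
  have gr: "grading_preserving psi" and po: "is_poisson psi" using A by simp_all
  obtain f where f: "X = A_cls f" using carrier_A[OF X] by blast
  have v0: "PsiP psi Y0 = X0" by (rule PsiP_const[OF kx])
  note vs = psi_vals[OF hom kx gr po]
  have "to2 (psi X) = to2 (phi X)"
    unfolding f to2_psi phi_cls to2_Phi by (rule unique_core[OF hom kx v0 vs])
  then show "psi X = phi X" by (simp add: to2_eq_iff)
qed

end
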